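(* Let $G=DS(L,P^{core},R)$ be a double spider and let $P$ be a path of length one belonging to $L\cup R$. Suppose at least one of the following holds: (1) $P\in R$, $\deg_G(v_l)\ge\deg_G(v_r)>3$, and the double spider $DS(L,P^{core},R\setminus\{P\})$ (i.e. $G$ with the edge of $P$ and its leaf removed) is strongly antimagic; (2) $P\in L$, $\deg_G(v_l)>\deg_G(v_r)\ge 3$, and the double spider $DS(L\setminus\{P\},P^{core},R)$ has a strongly antimagic labeling $f$ with $\varphi_f(v_l)>\varphi_f(v_r)$. Then $G$ is strongly antimagic.
   Context: For a graph $G=(V,E)$ and a bijection $f:E\to\{1,\dots,|E|\}$, $\varphi_f(u)=\sum_{e\ni u}f(e)$; $f$ is strongly antimagic if the $\varphi_f(u)$ are pairwise distinct over $V$ and $\deg(u)<\deg(v)$ implies $\varphi_f(u)<\varphi_f(v)$; a graph is strongly antimagic if it has such a labeling. A double spider is a tree with exactly two vertices of degree at least $3$, denoted $v_l$ and $v_r$, with the convention $\deg(v_l)\ge\deg(v_r)$. Its edge set is decomposed as $P^{core}\cup L\cup R$, where $P^{core}$ is the unique $v_l$–$v_r$ path, $L$ is the set of maximal paths having $v_l$ as an endpoint and edge-disjoint from $P^{core}$ (each ending at a leaf), and $R$ is the analogous set of paths at $v_r$. The double spider is written $DS(L,P^{core},R)$; the length of a path is its number of edges. *)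

theory Defs
  imports Main
begin

definition simple_graph :: "'a set \<Rightarrow> 'a set set \<Rightarrow> bool" where
  "simple_graph V E \<longleftrightarrow> finite V \<and> (\<forall>e\<in>E. \<exists>u v. e = {u, v} \<and> u \<noteq> v \<and> u \<in> V \<and> v \<in> V)"

definition deg :: "'a set set \<Rightarrow> 'a \<Rightarrow> nat" where
  "deg E v = card {e \<in> E. v \<in> e}"

definition connected_graph :: "'a set \<Rightarrow> 'a set set \<Rightarrow> bool" where
  "connected_graph V E \<longleftrightarrow> V \<noteq> {} \<and>
     (\<forall>u\<in>V. \<forall>v\<in>V. (u, v) \<in> {(a, b). {a, b} \<in> E}\<^sup>*)"

definition has_cycle :: "'a set \<Rightarrow> 'a set set \<Rightarrow> bool" where
  "has_cycle V E \<longleftrightarrow> (\<exists>vs. length vs \<ge> 3 \<and> distinct vs \<and> set vs \<subseteq> V \<and>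
     (\<forall>i < length vs. {vs ! i, vs ! ((i + 1) mod length vs)} \<in> E))"

definition tree :: "'a set \<Rightarrow> 'a set set \<Rightarrow> bool" where
  "tree V E \<longleftrightarrow> simple_graph V E \<and> connected_graph V E \<and> \<not> has_cycle V E"

definition double_spider :: "'a set \<Rightarrow> 'a set set \<Rightarrow> 'a \<Rightarrow> 'a \<Rightarrow> bool" where
  "double_spider V E vl vr \<longleftrightarrow> tree V E \<and> vl \<in> V \<and> vr \<in> V \<and> vl \<noteq> vr \<and>
     {v \<in> V. deg E v \<ge> 3} = {vl, vr} \<and> deg E vr \<le> deg E vl"

definition vsum :: "'a set set \<Rightarrow> ('a set \<Rightarrow> nat) \<Rightarrow> 'a \<Rightarrow> nat" where
  "vsum E f u = (\<Sum>e\<in>{e \<in> E. u \<in> e}. f e)"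

definition strongly_antimagic_labeling :: "'a set \<Rightarrow> 'a set set \<Rightarrow> ('a set \<Rightarrow> nat) \<Rightarrow> bool" where
  "strongly_antimagic_labeling V E f \<longleftrightarrow>
     bij_betw f E {1..card E} \<and>
     inj_on (vsum E f) V \<and>
     (\<forall>u\<in>V. \<forall>v\<in>V. deg E u < deg E v \<longrightarrow> vsum E f u < vsum E f v)"

definition strongly_antimagic :: "'a set \<Rightarrow> 'a set set \<Rightarrow> bool" where
  "strongly_antimagic V E \<longleftrightarrow> (\<exists>f. strongly_antimagic_labeling V E f)"

end

theory Submission
  imports Defs
begin

lemma sum_ge_card:
  assumes "finite A" "\<And>e. e \<in> A \<Longrightarrow> (1::nat) \<le> g e"
  shows "card A \<le> sum g A"
proof -
  have "sum (\<lambda>_. 1::nat) A \<le> sum g A" using assms by (intro sum_mono) auto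
  thus ?thesis by simp
qed

lemma sum_plus_one: "(\<Sum>e\<in>A. g e + (1::nat)) = sum g A + card A"
  by (induct A rule: infinite_finite_induct) auto

lemma key:
  fixes V :: "'a set" and E :: "'a set set"
  assumes finE: "finite E" and e0E: "e0 \<in> E" and e0: "e0 = {c, x}" and cx: "c \<noteq> x"
    and dx: "deg E x = 1" and dc: "deg E c \<ge> 2"
    and sa: "strongly_antimagic_labeling (V - {x}) (E - {e0}) g"
    and cV: "c \<in> V" and xV: "x \<in> V"
    and cond: "\<forall>u \<in> V - {x, c}.
        (deg E u < deg E c \<longrightarrow> vsum (E - {e0}) g u < vsum (E - {e0}) g c) \<and>
        (deg E c < deg E u \<longrightarrow> vsum (E - {e0}) g c < vsum (E - {e0}) g u) \<and>
        (deg E u = deg E c \<longrightarrow> vsum (E - {e0}) g u \<noteq> vsum (E - {e0}) g c)"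
  shows "strongly_antimagic V E"
proof -
  define E' where "E' = E - {e0}"
  define f where "f e = (if e = e0 then 1 else g e + 1)" for e
  have finE': "finite E'" using finE E'_def by auto
  have bijg: "bij_betw g E' {1..card E'}" and injg: "inj_on (vsum E' g) (V - {x})"
    and mono: "\<forall>u\<in>V - {x}. \<forall>v\<in>V - {x}. deg E' u < deg E' v \<longrightarrow> vsum E' g u < vsum E' g v"
    using sa unfolding strongly_antimagic_labeling_def E'_def by auto
  have g1: "e \<in> E' \<Longrightarrow> 1 \<le> g e" for e using bijg by (auto simp: bij_betw_def)
  have cardE: "card E = card E' + 1" using finE e0E E'_def
    by (simp add: card_Diff_singleton) (metis card_0_eq empty_iff Suc_pred not_gr0)
  have Eins: "E = insert e0 E'" "e0 \<notin> E'" using e0E E'_def by auto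
  have setsplit: "{e \<in> E. u \<in> e} = {e \<in> E'. u \<in> e} \<union> (if u = c \<or> u = x then {e0} else {})" for u
    using Eins e0 by auto
  have degsplit: "u \<noteq> x \<Longrightarrow> deg E u = deg E' u + (if u = c then 1 else 0)" for u
  proof -
    assume ux: "u \<noteq> x"
    show ?thesis
    proof (cases "u = c")
      case True
      have "{e \<in> E. u \<in> e} = insert e0 {e \<in> E'. u \<in> e}" using setsplit[of u] True by auto
      moreover have "finite {e \<in> E'. u \<in> e}" using finE' by auto
      ultimately show ?thesis using True Eins(2) by (simp add: deg_def)
    next
      case False
      thus ?thesis using setsplit[of u] ux by (simp add: deg_def)
    qed
  qed
  have vsE: "u \<noteq> x \<Longrightarrow> vsum E f u = vsum E' g u + deg E u" for u
  proof -
    assume ux: "u \<noteq> x"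
    have fin: "finite {e \<in> E'. u \<in> e}" using finE' by auto
    have s1: "(\<Sum>e\<in>{e \<in> E'. u \<in> e}. f e) = vsum E' g u + deg E' u"
    proof -
      have "(\<Sum>e\<in>{e \<in> E'. u \<in> e}. f e) = (\<Sum>e\<in>{e \<in> E'. u \<in> e}. g e + 1)"
        using Eins(2) by (intro sum.cong) (auto simp: f_def)
      also have "\<dots> = vsum E' g u + deg E' u" unfolding vsum_def deg_def by (rule sum_plus_one)
      finally show ?thesis .
    qed
    show ?thesis
    proof (cases "u = c")
      case True
      have "{e \<in> E. u \<in> e} = insert e0 {e \<in> E'. u \<in> e}" using setsplit[of u] True by auto
      hence "vsum E f u = f e0 + (\<Sum>e\<in>{e \<in> E'. u \<in> e}. f e)"
        unfolding vsum_def using fin Eins(2) by simp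
      thus ?thesis using s1 degsplit[OF ux] True by (simp add: f_def)
    next
      case False
      thus ?thesis using setsplit[of u] ux s1 degsplit[OF ux] by (simp add: vsum_def)
    qed
  qed
  have vsx: "vsum E f x = 1"
  proof -
    have fin: "finite {e \<in> E. x \<in> e}" using finE by auto
    have "e0 \<in> {e \<in> E. x \<in> e}" using e0E e0 by auto
    moreover have "card {e \<in> E. x \<in> e} = 1" using dx by (simp add: deg_def)
    ultimately have "{e \<in> E. x \<in> e} = {e0}" by (metis card_1_singletonE singletonD)
    thus ?thesis by (simp add: vsum_def f_def)
  qed
  have lb: "vsum E' g u \<ge> deg E' u" for u
    unfolding vsum_def deg_def using finE' g1 by (intro sum_ge_card) auto
  have cond': "\<forall>u \<in> V - {x, c}.
        (deg E u < deg E c \<longrightarrow> vsum E' g u < vsum E' g c) \<and>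
        (deg E c < deg E u \<longrightarrow> vsum E' g c < vsum E' g u) \<and>
        (deg E u = deg E c \<longrightarrow> vsum E' g u \<noteq> vsum E' g c)"
    using cond unfolding E'_def .
  have same: "u \<in> V - {x} \<Longrightarrow> u \<noteq> c \<Longrightarrow> deg E u = deg E' u" for u
    using degsplit[of u] by simp
  have lt': "u \<in> V - {x} \<Longrightarrow> v \<in> V - {x} \<Longrightarrow> deg E u < deg E v \<Longrightarrow> vsum E' g u < vsum E' g v" for u v
  proof -
    assume u: "u \<in> V - {x}" and v: "v \<in> V - {x}" and d: "deg E u < deg E v"
    show ?thesis
    proof (cases "u = c")
      case True
      hence "v \<noteq> c" using d by auto
      hence "v \<in> V - {x, c}" using v by blast
      from cond'[rule_format, OF this] show ?thesis using True d by blast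
    next
      case uc: False
      show ?thesis
      proof (cases "v = c")
        case True
        have "u \<in> V - {x, c}" using u uc by blast
        from cond'[rule_format, OF this] show ?thesis using True d by blast
      next
        case False
        have "deg E' u < deg E' v" using same[OF u uc] same[OF v False] d by simp
        thus ?thesis using mono u v by blast
      qed
    qed
  qed
  have ne': "u \<in> V - {x} \<Longrightarrow> v \<in> V - {x} \<Longrightarrow> deg E u = deg E v \<Longrightarrow> u \<noteq> v \<Longrightarrow> vsum E' g u \<noteq> vsum E' g v" for u v
  proof -
    assume u: "u \<in> V - {x}" and v: "v \<in> V - {x}" and d: "deg E u = deg E v" and uv: "u \<noteq> v"
    show ?thesis
    proof (cases "u = c")
      case True
      hence "v \<in> V - {x, c}" using v uv by blast
      from cond'[rule_format, OF this] show ?thesis using True d by metis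
    next
      case uc: False
      show ?thesis
      proof (cases "v = c")
        case True
        have "u \<in> V - {x, c}" using u uc by blast
        from cond'[rule_format, OF this] show ?thesis using True d by metis
      next
        case False
        show ?thesis using injg u v uv unfolding inj_on_def by blast
      qed
    qed
  qed
  have pos: "u \<in> V - {x} \<Longrightarrow> deg E u \<ge> 1 \<Longrightarrow> vsum E f u \<ge> 2" for u
  proof -
    assume u: "u \<in> V - {x}" and d: "deg E u \<ge> 1"
    show ?thesis
    proof (cases "deg E u \<ge> 2")
      case True thus ?thesis using vsE[of u] u by auto
    next
      case False
      hence "u \<noteq> c" using dc by auto
      hence "deg E' u = deg E u" using degsplit[of u] u by auto
      thus ?thesis using vsE[of u] u lb[of u] d False by auto
    qed
  qed
  have zero: "u \<in> V - {x} \<Longrightarrow> deg E u = 0 \<Longrightarrow> vsum E f u = 0" for u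
  proof -
    assume u: "u \<in> V - {x}" and d: "deg E u = 0"
    hence "u \<noteq> c" using dc by auto
    hence "deg E' u = 0" using degsplit[of u] u d by auto
    hence "{e \<in> E'. u \<in> e} = {}" using finE' by (simp add: deg_def)
    hence "vsum E' g u = 0" unfolding vsum_def by (simp only: sum.empty)
    thus ?thesis using vsE[of u] u d by simp
  qed
  have lab: "strongly_antimagic_labeling V E f"
    unfolding strongly_antimagic_labeling_def
  proof (intro conjI ballI impI)
    show "bij_betw f E {1..card E}"
    proof -
      have i1: "inj_on f E'" using bijg Eins(2) unfolding bij_betw_def inj_on_def f_def
        by (metis add_right_cancel)
      have "f e \<noteq> 1" if "e \<in> E'" for e using g1[OF that] Eins(2) that by (auto simp: f_def)
      moreover have "f e0 = 1" by (simp add: f_def)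
      ultimately have "f e0 \<notin> f ` E'" by (metis imageE)
      hence "inj_on f E" unfolding Eins(1) using i1 by (auto simp add: inj_on_insert)
      moreover have "f ` E = {1..card E}"
      proof -
        have "f ` E' = (\<lambda>n. n + 1) ` g ` E'" using Eins(2) by (auto simp: f_def image_iff)
        also have "\<dots> = (\<lambda>n. n + 1) ` {1..card E'}" using bijg by (simp add: bij_betw_def)
        also have "\<dots> = {2..card E' + 1}" by (simp add: image_add_atLeastAtMost)
        finally have "f ` E' = {2..card E' + 1}" .
        moreover have "f ` E = insert (f e0) (f ` E')" using Eins(1) by simp
        ultimately have "f ` E = insert 1 {2..card E' + 1}" by (simp add: f_def)
        thus ?thesis using cardE by auto
      qed
      ultimately show ?thesis by (simp add: bij_betw_def)
    qed
  next
    show "inj_on (vsum E f) V"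
    proof (rule inj_onI)
      fix u v assume u: "u \<in> V" and v: "v \<in> V" and eq: "vsum E f u = vsum E f v"
      show "u = v"
      proof (rule ccontr)
        assume uv: "u \<noteq> v"
        { fix a b assume a: "a \<in> V" "a \<noteq> x" and b: "b \<in> V" "b \<noteq> x" and ab: "a \<noteq> b"
          have "vsum E f a \<noteq> vsum E f b"
          proof (cases "deg E a = deg E b")
            case True thus ?thesis using ne'[of a b] a b ab vsE[of a] vsE[of b] by auto
          next
            case False
            thus ?thesis using lt'[of a b] lt'[of b a] a b vsE[of a] vsE[of b]
              by (cases "deg E a < deg E b") auto
          qed }
        note both = this
        { fix a assume a: "a \<in> V" "a \<noteq> x"
          have "vsum E f a \<noteq> 1"
            using pos[of a] zero[of a] a by (cases "deg E a = 0") auto }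
        note onex = this
        show False using both[OF u _ v] onex u v uv eq vsx by (cases "u = x"; cases "v = x") auto
      qed
    qed
  next
    fix u v assume u: "u \<in> V" and v: "v \<in> V" and d: "deg E u < deg E v"
    show "vsum E f u < vsum E f v"
    proof (cases "u = x")
      case True
      hence "v \<noteq> x" using d by auto
      thus ?thesis using True pos[of v] d dx v vsx by auto
    next
      case ux: False
      show ?thesis
      proof (cases "v = x")
        case True
        hence "deg E u = 0" using d dx by auto
        thus ?thesis using zero[of u] u ux True vsx by auto
      next
        case False
        thus ?thesis using lt'[of u v] u v ux d vsE[of u] vsE[of v] by auto
      qed
    qed
  qed
  thus ?thesis unfolding strongly_antimagic_def by blast
qed

theorem lemma3:
  fixes V :: "'a set" and E :: "'a set set" and vl vr x :: 'a
  assumes ds: "double_spider V E vl vr"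
    and cases:
      "(x \<in> V \<and> {vr, x} \<in> E \<and> deg E x = 1 \<and>
          deg E vl \<ge> deg E vr \<and> deg E vr > 3 \<and>
          strongly_antimagic (V - {x}) (E - {{vr, x}}))
       \<or> (x \<in> V \<and> {vl, x} \<in> E \<and> deg E x = 1 \<and>
          deg E vl > deg E vr \<and> deg E vr \<ge> 3 \<and>
          (\<exists>f. strongly_antimagic_labeling (V - {x}) (E - {{vl, x}}) f \<and>
               vsum (E - {{vl, x}}) f vl > vsum (E - {{vl, x}}) f vr))"
  shows "strongly_antimagic V E"
proof -
  have sg: "simple_graph V E" and vlV: "vl \<in> V" and vrV: "vr \<in> V" and lr: "vl \<noteq> vr"
    and big: "{v \<in> V. deg E v \<ge> 3} = {vl, vr}"
    using ds unfolding double_spider_def tree_def by auto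
  have finE: "finite E"
  proof -
    have "E \<subseteq> Pow V" using sg unfolding simple_graph_def by auto
    moreover have "finite V" using sg unfolding simple_graph_def by auto
    ultimately show ?thesis by (meson finite_Pow_iff finite_subset)
  qed
  have bigD: "u \<in> V \<Longrightarrow> deg E u \<ge> 3 \<Longrightarrow> u = vl \<or> u = vr" for u using big by blast
  from cases show ?thesis
  proof
    assume h: "x \<in> V \<and> {vr, x} \<in> E \<and> deg E x = 1 \<and>
          deg E vl \<ge> deg E vr \<and> deg E vr > 3 \<and>
          strongly_antimagic (V - {x}) (E - {{vr, x}})"
    then obtain g where g: "strongly_antimagic_labeling (V - {x}) (E - {{vr, x}}) g"
      by (auto simp: strongly_antimagic_def)
    have cx: "vr \<noteq> x" using h by auto
    let ?E' = "E - {{vr, x}}"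
    have degs: "u \<noteq> x \<Longrightarrow> deg E u = deg ?E' u + (if u = vr then 1 else 0)" for u
    proof -
      assume ux: "u \<noteq> x"
      have fin: "finite {e \<in> ?E'. u \<in> e}" using finE by auto
      show ?thesis
      proof (cases "u = vr")
        case True
        have "{e \<in> E. u \<in> e} = insert {vr, x} {e \<in> ?E'. u \<in> e}" using True h by auto
        thus ?thesis using fin True by (simp add: deg_def)
      next
        case False
        have "{e \<in> E. u \<in> e} = {e \<in> ?E'. u \<in> e}" using False ux by auto
        thus ?thesis using False by (simp add: deg_def)
      qed
    qed
    have mono: "\<forall>u\<in>V - {x}. \<forall>v\<in>V - {x}. deg ?E' u < deg ?E' v \<longrightarrow> vsum ?E' g u < vsum ?E' g v"
      using g unfolding strongly_antimagic_labeling_def by auto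
    have vrV': "vr \<in> V - {x}" using vrV cx by auto
    show ?thesis
    proof (rule key[OF finE _ refl cx _ _ g vrV])
      show "{vr, x} \<in> E" "deg E x = 1" "x \<in> V" "2 \<le> deg E vr" using h by auto
      show "\<forall>u \<in> V - {x, vr}.
        (deg E u < deg E vr \<longrightarrow> vsum ?E' g u < vsum ?E' g vr) \<and>
        (deg E vr < deg E u \<longrightarrow> vsum ?E' g vr < vsum ?E' g u) \<and>
        (deg E u = deg E vr \<longrightarrow> vsum ?E' g u \<noteq> vsum ?E' g vr)"
      proof
        fix u assume u: "u \<in> V - {x, vr}"
        have du: "deg E u = deg ?E' u" using degs[of u] u by auto
        have dvr: "deg E vr = deg ?E' vr + 1" using degs[of vr] cx by auto
        have uV: "u \<in> V - {x}" using u by auto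
        show "(deg E u < deg E vr \<longrightarrow> vsum ?E' g u < vsum ?E' g vr) \<and>
          (deg E vr < deg E u \<longrightarrow> vsum ?E' g vr < vsum ?E' g u) \<and>
          (deg E u = deg E vr \<longrightarrow> vsum ?E' g u \<noteq> vsum ?E' g vr)"
        proof (intro conjI impI)
          assume d: "deg E u < deg E vr"
          show "vsum ?E' g u < vsum ?E' g vr"
          proof (cases "deg E u < deg E vr - 1")
            case True thus ?thesis using mono uV vrV' du dvr by auto
          next
            case False
            hence "deg E u \<ge> 3" using h d by auto
            hence "u = vl" using bigD u by auto
            thus ?thesis using h d by auto
          qed
        next
          assume d: "deg E vr < deg E u"
          thus "vsum ?E' g vr < vsum ?E' g u" using mono uV vrV' du dvr by auto
        next
          assume d: "deg E u = deg E vr"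
          have "vsum ?E' g vr < vsum ?E' g u" using mono uV vrV' du dvr d by auto
          thus "vsum ?E' g u \<noteq> vsum ?E' g vr" by auto
        qed
      qed
    qed
  next
    assume h: "x \<in> V \<and> {vl, x} \<in> E \<and> deg E x = 1 \<and>
          deg E vl > deg E vr \<and> deg E vr \<ge> 3 \<and>
          (\<exists>f. strongly_antimagic_labeling (V - {x}) (E - {{vl, x}}) f \<and>
               vsum (E - {{vl, x}}) f vl > vsum (E - {{vl, x}}) f vr)"
    let ?E' = "E - {{vl, x}}"
    from h obtain g where g: "strongly_antimagic_labeling (V - {x}) ?E' g"
      and gt: "vsum ?E' g vl > vsum ?E' g vr" by auto
    have cx: "vl \<noteq> x" using h by auto
    have degs: "u \<noteq> x \<Longrightarrow> deg E u = deg ?E' u + (if u = vl then 1 else 0)" for u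
    proof -
      assume ux: "u \<noteq> x"
      have fin: "finite {e \<in> ?E'. u \<in> e}" using finE by auto
      show ?thesis
      proof (cases "u = vl")
        case True
        have "{e \<in> E. u \<in> e} = insert {vl, x} {e \<in> ?E'. u \<in> e}" using True h by auto
        thus ?thesis using fin True by (simp add: deg_def)
      next
        case False
        have "{e \<in> E. u \<in> e} = {e \<in> ?E'. u \<in> e}" using False ux by auto
        thus ?thesis using False by (simp add: deg_def)
      qed
    qed
    have mono: "\<forall>u\<in>V - {x}. \<forall>v\<in>V - {x}. deg ?E' u < deg ?E' v \<longrightarrow> vsum ?E' g u < vsum ?E' g v"
      using g unfolding strongly_antimagic_labeling_def by auto
    have vlV': "vl \<in> V - {x}" using vlV cx by auto
    show ?thesis
    proof (rule key[OF finE _ refl cx _ _ g vlV])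
      show "{vl, x} \<in> E" "deg E x = 1" "x \<in> V" "2 \<le> deg E vl" using h by auto
      show "\<forall>u \<in> V - {x, vl}.
        (deg E u < deg E vl \<longrightarrow> vsum ?E' g u < vsum ?E' g vl) \<and>
        (deg E vl < deg E u \<longrightarrow> vsum ?E' g vl < vsum ?E' g u) \<and>
        (deg E u = deg E vl \<longrightarrow> vsum ?E' g u \<noteq> vsum ?E' g vl)"
      proof
        fix u assume u: "u \<in> V - {x, vl}"
        have du: "deg E u = deg ?E' u" using degs[of u] u by auto
        have dvl: "deg E vl = deg ?E' vl + 1" using degs[of vl] cx by auto
        have uV: "u \<in> V - {x}" using u by auto
        show "(deg E u < deg E vl \<longrightarrow> vsum ?E' g u < vsum ?E' g vl) \<and>
          (deg E vl < deg E u \<longrightarrow> vsum ?E' g vl < vsum ?E' g u) \<and>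
          (deg E u = deg E vl \<longrightarrow> vsum ?E' g u \<noteq> vsum ?E' g vl)"
        proof (intro conjI impI)
          assume d: "deg E u < deg E vl"
          show "vsum ?E' g u < vsum ?E' g vl"
          proof (cases "deg E u < deg E vl - 1")
            case True thus ?thesis using mono uV vlV' du dvl by auto
          next
            case False
            hence "deg E u \<ge> 3" using h d by auto
            hence "u = vr" using bigD u by auto
            thus ?thesis using gt by auto
          qed
        next
          assume d: "deg E vl < deg E u"
          hence "deg E u \<ge> 3" using h by auto
          hence "u = vr" using bigD u by auto
          thus "vsum ?E' g vl < vsum ?E' g u" using h d by auto
        next
          assume d: "deg E u = deg E vl"
          hence "deg E u \<ge> 3" using h by auto
          hence "u = vr" using bigD u by auto
          thus "vsum ?E' g u \<noteq> vsum ?E' g vl" using h d by auto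
        qed
      qed
    qed
  qed
qed

end
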